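(* Fix an integer $k\ge1$ and a real $d>1$. Then every $\lambda\in[0,\lambda_c(d))$ satisfies real block contraction for $k$ and $d$.
   Context: For $x>1$, $\lambda_c(x)=x^x/(x-1)^{x+1}$. For a rooted tree $T$ with root $r$ and $k\ge0$, $C_k(T)=\{v:\mathrm{dist}_T(r,v)=k\}$. A self-avoiding walk (SAW) of length $i$ from $v$ is a walk $v=v_0,\dots,v_i$ with distinct vertices; $\mu_k(T)=\sup_v\mathcal{N}_{\le k}(T,v)^{1/k}$ where $\mathcal{N}_{\le k}(T,v)$ counts SAWs of length $1$ to $k$ from $v$. Block operator: for $\lambda\in\mathbb{R}$, $k\ge1$ and a rooted tree $T$, $\mathcal{F}_{\lambda,T,k}$ maps $\mathbf R\in\mathbb{R}^{C_k(T)}$ (where defined) to a real number as follows: consider the subtree of vertices of depth at most $k$; set $R_u=\mathbf R_u$ for $u\in C_k(T)$, $R_u=\lambda$ for every other leaf $u$, and for each internal vertex $v$ with children $v_1,\dots,v_m$ set $R_v=\lambda\prod_{i=1}^m(1+R_{v_i})^{-1}$, proceeding upward; then $\mathcal{F}_{\lambda,T,k}(\mathbf R)=R_r$. For an injective function $\varphi$, $\mathcal{F}^\varphi_{\lambda,T,k}(\mathbf x)=\varphi(\mathcal{F}_{\lambda,T,k}(\varphi^{-1}(x_u))_{u\in C_k(T)})$. Let $\mathcal{T}$ be the set of rooted trees $T$ of depth at most $k$ with $\mu_k(T)\le d$. We say $\lambda\in\mathbb{R}$ satisfies real block contraction for $k$ and $d$ if there exist a compact real interval $\mathcal{J}$ with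 $\lambda\in\mathcal{J}$ and $-1\notin\mathcal{J}$ and a real-analytic $\varphi:\mathcal{J}\to\mathcal{I}:=\varphi(\mathcal{J})$ with $\varphi'(x)\neq0$ for all $x\in\mathcal{J}$, such that (1) $\mathcal{F}_{\lambda,T,k}(\mathcal{J}^{C_k(T)})\subseteq\mathcal{J}$ for all $T\in\mathcal{T}$, and (2) there is $\eta>0$ with $\|\nabla\mathcal{F}^\varphi_{\lambda,T,k}(\mathbf x)\|_1\le1-\eta$ for all $\mathbf x\in\mathcal{I}^{C_k(T)}$ and all $T\in\mathcal{T}$. *)

theory Defs
  imports "HOL-Analysis.Analysis"
begin

definition lambda_c :: "real \<Rightarrow> real" where
  "lambda_c x = x powr x / (x - 1) powr (x + 1)"

text \<open>Finite rooted trees (ordered children); vertices are addresses (paths from the root).\<close>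
datatype rtree = Node "rtree list"

fun subtree :: "rtree \<Rightarrow> nat list \<Rightarrow> rtree option" where
  "subtree t [] = Some t"
| "subtree (Node ts) (i # p) = (if i < length ts then subtree (ts ! i) p else None)"

definition verts :: "rtree \<Rightarrow> nat list set" where
  "verts T = {p. subtree T p \<noteq> None}"

definition level :: "rtree \<Rightarrow> nat \<Rightarrow> nat list set" where
  "level T k = {p \<in> verts T. length p = k}"

definition tree_depth_le :: "rtree \<Rightarrow> nat \<Rightarrow> bool" where
  "tree_depth_le T k \<longleftrightarrow> (\<forall>p\<in>verts T. length p \<le> k)"

definition adj :: "rtree \<Rightarrow> nat list \<Rightarrow> nat list \<Rightarrow> bool" where
  "adj T u w \<longleftrightarrow> u \<in> verts T \<and> w \<in> verts T \<and> ((\<exists>i. w = u @ [i]) \<or> (\<exists>i. u = w @ [i]))"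

definition is_saw :: "rtree \<Rightarrow> nat list \<Rightarrow> nat \<Rightarrow> nat list list \<Rightarrow> bool" where
  "is_saw T v i ws \<longleftrightarrow> length ws = i + 1 \<and> ws ! 0 = v \<and> v \<in> verts T \<and> distinct ws
      \<and> (\<forall>j<i. adj T (ws ! j) (ws ! (j + 1)))"

definition N_le :: "nat \<Rightarrow> rtree \<Rightarrow> nat list \<Rightarrow> nat" where
  "N_le k T v = card {ws. \<exists>i. 1 \<le> i \<and> i \<le> k \<and> is_saw T v i ws}"

definition mu :: "nat \<Rightarrow> rtree \<Rightarrow> real" where
  "mu k T = (SUP v\<in>verts T. real (N_le k T v) powr (1 / real k))"

text \<open>Block operator: the argument R is read at the depth-k vertices (addresses relative to the root).\<close>
fun blk :: "real \<Rightarrow> nat \<Rightarrow> (nat list \<Rightarrow> real) \<Rightarrow> rtree \<Rightarrow> real" where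
  "blk lam 0 R t = R []"
| "blk lam (Suc j) R (Node ts) =
     (if ts = [] then lam
      else lam * (\<Prod>i<length ts. inverse (1 + blk lam j (\<lambda>p. R (i # p)) (ts ! i))))"

fun blk_defined :: "real \<Rightarrow> nat \<Rightarrow> (nat list \<Rightarrow> real) \<Rightarrow> rtree \<Rightarrow> bool" where
  "blk_defined lam 0 R t = True"
| "blk_defined lam (Suc j) R (Node ts) =
     (\<forall>i<length ts. blk_defined lam j (\<lambda>p. R (i # p)) (ts ! i)
                   \<and> 1 + blk lam j (\<lambda>p. R (i # p)) (ts ! i) \<noteq> 0)"

definition blk_phi :: "real \<Rightarrow> nat \<Rightarrow> (real \<Rightarrow> real) \<Rightarrow> real set \<Rightarrow> (nat list \<Rightarrow> real) \<Rightarrow> rtree \<Rightarrow> real" where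
  "blk_phi lam k \<phi> J x T = \<phi> (blk lam k (\<lambda>u. the_inv_into J \<phi> (x u)) T)"

definition real_analytic_on :: "(real \<Rightarrow> real) \<Rightarrow> real set \<Rightarrow> bool" where
  "real_analytic_on f S \<longleftrightarrow> (\<forall>x\<in>S. \<exists>r>0. \<exists>c::nat \<Rightarrow> real.
      \<forall>y. \<bar>y - x\<bar> < r \<longrightarrow> (\<lambda>n. c n * (y - x) ^ n) sums f y)"

definition tree_class :: "nat \<Rightarrow> real \<Rightarrow> rtree set" where
  "tree_class k d = {T. tree_depth_le T k \<and> mu k T \<le> d}"

definition real_block_contraction :: "real \<Rightarrow> nat \<Rightarrow> real \<Rightarrow> bool" where
  "real_block_contraction lam k d \<longleftrightarrow>
    (\<exists>a b. \<exists>\<phi> :: real \<Rightarrow> real.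
       a \<le> b \<and> lam \<in> {a..b} \<and> -1 \<notin> {a..b} \<and>
       real_analytic_on \<phi> {a..b} \<and> inj_on \<phi> {a..b} \<and> (\<forall>x\<in>{a..b}. deriv \<phi> x \<noteq> 0) \<and>
       (\<forall>T\<in>tree_class k d. \<forall>R. (\<forall>u\<in>level T k. R u \<in> {a..b}) \<longrightarrow>
            blk_defined lam k R T \<and> blk lam k R T \<in> {a..b}) \<and>
       (\<exists>\<eta>>0. \<forall>T\<in>tree_class k d. \<forall>x. (\<forall>u\<in>level T k. x u \<in> \<phi> ` {a..b}) \<longrightarrow>
            (\<exists>D :: nat list \<Rightarrow> real.
               (\<forall>u\<in>level T k. ((\<lambda>t. blk_phi lam k \<phi> {a..b} (x(u := t)) T)
                                  has_real_derivative D u) (at (x u) within \<phi> ` {a..b}))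
               \<and> (\<Sum>u\<in>level T k. \<bar>D u\<bar>) \<le> 1 - \<eta>)))"

end

theory Submission
  imports Defs "HOL-Complex_Analysis.Complex_Analysis"
begin

lemma subtree_append:
  "subtree t (p @ q) = (case subtree t p of None \<Rightarrow> None | Some s \<Rightarrow> subtree s q)"
proof (induction p arbitrary: t)
  case Nil then show ?case by simp
next
  case (Cons i p)
  obtain ts where t: "t = Node ts" by (cases t)
  show ?case using Cons by (simp add: t)
qed

lemma verts_prefix: "p @ q \<in> verts t \<Longrightarrow> p \<in> verts t"
  by (auto simp: verts_def subtree_append split: option.splits)

lemma Nil_verts[simp]: "[] \<in> verts t" by (simp add: verts_def)

lemma Cons_verts: "(i # p \<in> verts (Node ts)) \<longleftrightarrow> i < length ts \<and> p \<in> verts (ts ! i)"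
  by (simp add: verts_def)

lemma verts_Node: "verts (Node ts) = insert [] (\<Union>i<length ts. (#) i ` verts (ts!i))"
proof -
  have "p \<in> verts (Node ts) \<longleftrightarrow> p \<in> insert [] (\<Union>i<length ts. (#) i ` verts (ts!i))" for p
    by (cases p) (auto simp: Cons_verts)
  then show ?thesis by blast
qed

lemma finite_verts: "finite (verts t)"
proof (induction t)
  case (Node ts)
  then show ?case by (simp add: verts_Node)
qed

lemma level_0: "level t 0 = {[]}" by (auto simp: level_def)

lemma level_Suc: "level (Node ts) (Suc j) = (\<Union>i<length ts. (#) i ` level (ts!i) j)"
proof -
  have "p \<in> level (Node ts) (Suc j) \<longleftrightarrow> p \<in> (\<Union>i<length ts. (#) i ` level (ts!i) j)" for p
    by (cases p) (auto simp: level_def Cons_verts)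
  then show ?thesis by blast
qed

lemma finite_level: "finite (level t j)"
  using finite_verts[of t] by (simp add: level_def)

lemma sum_level_Suc:
  "(\<Sum>u\<in>level (Node ts) (Suc j). f u) = (\<Sum>i<length ts. \<Sum>p\<in>level (ts!i) j. f (i#p))"
proof -
  have "(\<Sum>u\<in>level (Node ts) (Suc j). f u) = (\<Sum>i<length ts. \<Sum>u\<in>(#) i ` level (ts!i) j. f u)"
    unfolding level_Suc
    by (rule sum.UNION_disjoint) (auto simp: finite_level)
  also have "\<dots> = (\<Sum>i<length ts. \<Sum>p\<in>level (ts!i) j. f (i#p))"
    by (rule sum.cong) (auto simp: sum.reindex)
  finally show ?thesis .
qed

definition pw :: "nat list \<Rightarrow> nat list list" where
  "pw q = map (\<lambda>i. take i q) [0..<Suc (length q)]"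

lemma take_verts: "q \<in> verts T \<Longrightarrow> take i q \<in> verts T"
  using verts_prefix[of "take i q" "drop i q" T] by simp

lemma pw_saw: "q \<in> verts T \<Longrightarrow> is_saw T [] (length q) (pw q)"
proof -
  assume q: "q \<in> verts T"
  have len: "length (pw q) = length q + 1" by (simp add: pw_def)
  have d: "distinct (pw q)"
    unfolding pw_def
  proof (rule distinct_map[THEN iffD2], intro conjI)
    show "inj_on (\<lambda>i. take i q) (set [0..<Suc (length q)])"
    proof (rule inj_onI)
      fix i j assume "i \<in> set [0..<Suc (length q)]" "j \<in> set [0..<Suc (length q)]" "take i q = take j q"
      then have "length (take i q) = length (take j q)" "i \<le> length q" "j \<le> length q" by auto
      then show "i = j" by simp
    qed
  qed simp
  have "adj T (pw q ! j) (pw q ! (j+1))" if "j < length q" for j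
  proof -
    have "pw q ! j = take j q" "pw q ! (j+1) = take (j+1) q"
      using that by (simp_all add: pw_def nth_append del: upt_Suc)
    moreover have "take (j+1) q = take j q @ [q ! j]"
      using that by (simp add: take_Suc_conv_app_nth)
    ultimately show ?thesis using q take_verts[OF q, of j] take_verts[OF q, of "j+1"] by (auto simp: adj_def)
  qed
  then show ?thesis using len d by (simp add: is_saw_def pw_def del: upt_Suc)
qed

lemma pw_last: "pw q ! length q = q"
  by (simp add: pw_def nth_append del: upt_Suc)

lemma saw_set: "is_saw T v i ws \<Longrightarrow> set ws \<subseteq> verts T"
proof -
  assume s: "is_saw T v i ws"
  have "j \<le> i \<Longrightarrow> ws ! j \<in> verts T" for j
  proof (induction j)
    case 0 then show ?case using s by (simp add: is_saw_def)
  next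
    case (Suc j) then show ?case using s by (auto simp: is_saw_def adj_def)
  qed
  then show ?thesis using s by (auto simp: is_saw_def in_set_conv_nth)
qed

lemma finite_saws: "finite {ws. \<exists>i. 1 \<le> i \<and> i \<le> k \<and> is_saw T v i ws}"
proof (rule finite_subset)
  show "{ws. \<exists>i. 1 \<le> i \<and> i \<le> k \<and> is_saw T v i ws} \<subseteq> {ws. set ws \<subseteq> verts T \<and> length ws \<le> k+1}"
    using saw_set by (auto simp: is_saw_def)
  show "finite {ws. set ws \<subseteq> verts T \<and> length ws \<le> k+1}"
    by (rule finite_lists_length_le[OF finite_verts])
qed

lemma card_desc_le_N:
  "card {q \<in> verts T. 1 \<le> length q \<and> length q \<le> k} \<le> N_le k T []"
  unfolding N_le_def
proof (rule card_inj_on_le[where f = pw])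
  show "inj_on pw {q \<in> verts T. 1 \<le> length q \<and> length q \<le> k}"
  proof (rule inj_onI)
    fix x y assume "pw x = pw y"
    moreover have "length (pw x) = Suc (length x)" "length (pw y) = Suc (length y)" by (simp_all add: pw_def)
    ultimately have "length x = length y" by simp
    then show "x = y" using pw_last[of x] pw_last[of y] \<open>pw x = pw y\<close> by metis
  qed
  show "pw ` {q \<in> verts T. 1 \<le> length q \<and> length q \<le> k} \<subseteq> {ws. \<exists>i. 1 \<le> i \<and> i \<le> k \<and> is_saw T [] i ws}"
    using pw_saw by blast
  show "finite {ws. \<exists>i. 1 \<le> i \<and> i \<le> k \<and> is_saw T [] i ws}" by (rule finite_saws)
qed

lemma N_le_bound:
  assumes "k \<ge> 1" "d > 0" "mu k T \<le> d"
  shows "real (N_le k T []) \<le> d ^ k"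
proof -
  have "real (N_le k T []) powr (1 / real k) \<le> mu k T"
    unfolding mu_def
    by (rule cSUP_upper) (auto intro!: bdd_above_finite finite_verts)
  then have le: "real (N_le k T []) powr (1 / real k) \<le> d" using assms by linarith
  have "real (N_le k T []) = (real (N_le k T []) powr (1 / real k)) powr real k"
    using assms(1) by (simp add: powr_powr)
  also have "\<dots> \<le> d powr real k"
    by (rule powr_mono2) (use le in auto)
  also have "\<dots> = d ^ k" using assms by (simp add: powr_realpow)
  finally show ?thesis .
qed

fun degb :: "nat \<Rightarrow> nat \<Rightarrow> rtree \<Rightarrow> bool" where
  "degb M 0 t = True"
| "degb M (Suc j) (Node ts) = (length ts \<le> M \<and> (\<forall>i<length ts. degb M j (ts!i)))"

lemma degb_from:
  "(\<And>p ts. subtree t p = Some (Node ts) \<Longrightarrow> length p < j \<Longrightarrow> length ts \<le> M) \<Longrightarrow> degb M j t"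
proof (induction j arbitrary: t)
  case 0 then show ?case by simp
next
  case (Suc j)
  obtain ts where t: "t = Node ts" by (cases t)
  have "length ts \<le> M" using Suc.prems[of "[]" ts] by (simp add: t)
  moreover have "degb M j (ts!i)" if "i < length ts" for i
  proof (rule Suc.IH)
    fix p ss assume "subtree (ts!i) p = Some (Node ss)" "length p < j"
    then show "length ss \<le> M" using Suc.prems[of "i#p" ss] that by (simp add: t)
  qed
  ultimately show ?case by (simp add: t)
qed

lemma level_child: "i < length ts \<Longrightarrow> p \<in> level (ts!i) j \<Longrightarrow> i # p \<in> level (Node ts) (Suc j)"
  by (auto simp: level_Suc)

lemma blk_Suc_Node: "ts \<noteq> [] \<Longrightarrow> blk lam (Suc j) R (Node ts) =
   lam * (\<Prod>i<length ts. inverse (1 + blk lam j (\<lambda>p. R (i # p)) (ts ! i)))"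
  by simp

lemma blk_inv:
  assumes "0 \<le> lam"
  shows "degb M j t \<Longrightarrow> (\<forall>u\<in>level t j. R u \<in> {lam / (1+lam)^M..lam}) \<Longrightarrow>
    blk_defined lam j R t \<and> blk lam j R t \<in> {lam / (1+lam)^M..lam}"
proof (induction j arbitrary: t R)
  case 0 then show ?case by (simp add: level_0)
next
  case (Suc j)
  obtain ts where t: "t = Node ts" by (cases t)
  let ?lo = "lam / (1+lam)^M"
  have "1 \<le> (1+lam)^M" using assms by (simp add: one_le_power)
  then have lo: "0 \<le> ?lo" "?lo \<le> lam" using assms by (auto simp: divide_le_eq mult_le_cancel_left1 mult_le_cancel_left2 mult_left_le)
  have ch: "blk_defined lam j (\<lambda>p. R (i # p)) (ts!i) \<and> blk lam j (\<lambda>p. R (i # p)) (ts!i) \<in> {?lo..lam}"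
    if i: "i < length ts" for i
  proof (rule Suc.IH)
    show "degb M j (ts!i)" using Suc.prems(1) i by (simp add: t)
    show "\<forall>u\<in>level (ts ! i) j. R (i # u) \<in> {?lo..lam}"
      using Suc.prems(2) level_child[OF i] by (simp add: t)
  qed
  have def: "blk_defined lam (Suc j) R t"
    using ch lo by (fastforce simp: t)
  show ?case
  proof (cases "ts = []")
    case True then show ?thesis using def lo by (simp add: t)
  next
    case False
    let ?b = "\<lambda>i. blk lam j (\<lambda>p. R (i # p)) (ts ! i)"
    have bi: "0 \<le> ?b i \<and> ?b i \<le> lam" if "i < length ts" for i
      using ch[OF that] lo by auto
    have up: "(\<Prod>i<length ts. inverse (1 + ?b i)) \<le> 1"
      by (rule prod_le_1) (use bi in \<open>auto simp: inverse_le_1_iff\<close>)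
    have "(\<Prod>i<length ts. inverse (1 + lam)) \<le> (\<Prod>i<length ts. inverse (1 + ?b i))"
    proof (rule prod_mono)
      fix i assume "i \<in> {..<length ts}"
      then have "0 \<le> ?b i" "?b i \<le> lam" using bi by auto
      then show "0 \<le> inverse (1+lam) \<and> inverse (1+lam) \<le> inverse (1 + ?b i)"
        using assms by (auto intro!: le_imp_inverse_le)
    qed
    then have "inverse (1+lam) ^ length ts \<le> (\<Prod>i<length ts. inverse (1 + ?b i))" by simp
    moreover have "inverse (1+lam) ^ M \<le> inverse (1+lam) ^ length ts"
      using Suc.prems(1) assms by (intro power_decreasing) (auto simp: t inverse_le_1_iff)
    ultimately have low: "inverse (1+lam) ^ M \<le> (\<Prod>i<length ts. inverse (1 + ?b i))" by linarith
    have "?lo = lam * inverse (1+lam) ^ M" by (simp add: field_simps power_inverse)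
    also have "\<dots> \<le> lam * (\<Prod>i<length ts. inverse (1 + ?b i))"
      using low assms by (rule mult_left_mono) 
    finally have "?lo \<le> blk lam (Suc j) R t" using False by (simp add: t)
    moreover have "blk lam (Suc j) R t \<le> lam"
      using False up assms by (simp add: t mult_left_le)
    ultimately show ?thesis using def by simp
  qed
qed

lemma desc_card:
  assumes "k \<ge> 1" "d > 0" "T \<in> tree_class k d"
  shows "real (card {q \<in> verts T. 1 \<le> length q \<and> length q \<le> k}) \<le> d ^ k"
  using card_desc_le_N[of T k] N_le_bound[of k d T] assms by (simp add: tree_class_def)

lemma class_degb:
  assumes "k \<ge> 1" "d > 0" "T \<in> tree_class k d"
  shows "degb (nat \<lfloor>d ^ k\<rfloor>) k T"
proof (rule degb_from)
  fix p ts assume st: "subtree T p = Some (Node ts)" and lp: "length p < k"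
  let ?S = "(\<lambda>i. p @ [i]) ` {..<length ts}"
  have sub: "?S \<subseteq> {q \<in> verts T. 1 \<le> length q \<and> length q \<le> k}"
    using st lp by (auto simp: verts_def subtree_append)
  have "length ts = card ?S" by (simp add: card_image inj_on_def)
  also have "\<dots> \<le> card {q \<in> verts T. 1 \<le> length q \<and> length q \<le> k}"
    by (rule card_mono[OF _ sub]) (simp add: finite_verts)
  finally have "real (length ts) \<le> d ^ k" using desc_card[OF assms] by linarith
  then show "length ts \<le> nat \<lfloor>d ^ k\<rfloor>" by (simp add: le_nat_floor)
qed

lemma level_card:
  assumes "k \<ge> 1" "d > 0" "T \<in> tree_class k d"
  shows "real (card (level T k)) \<le> d ^ k"
proof -
  have "level T k \<subseteq> {q \<in> verts T. 1 \<le> length q \<and> length q \<le> k}"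
    using assms(1) by (auto simp: level_def)
  then have "card (level T k) \<le> card {q \<in> verts T. 1 \<le> length q \<and> length q \<le> k}"
    by (rule card_mono[rotated]) (simp add: finite_verts)
  then show ?thesis using desc_card[OF assms] by linarith
qed

fun Dblk :: "real \<Rightarrow> nat \<Rightarrow> (nat list \<Rightarrow> real) \<Rightarrow> rtree \<Rightarrow> nat list \<Rightarrow> real" where
  "Dblk lam 0 R t u = 1"
| "Dblk lam (Suc j) R (Node ts) (i # p) = - blk lam (Suc j) R (Node ts)
     * inverse (1 + blk lam j (\<lambda>q. R (i # q)) (ts ! i)) * Dblk lam j (\<lambda>q. R (i # q)) (ts ! i) p"
| "Dblk lam (Suc j) R (Node ts) [] = 0"

lemma blk_deriv:
  "u \<in> level t j \<Longrightarrow> blk_defined lam j R t \<Longrightarrow>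
   ((\<lambda>s. blk lam j (R(u := s)) t) has_real_derivative Dblk lam j R t u) (at (R u))"
proof (induction j arbitrary: t R u)
  case 0
  then show ?case by (simp add: level_0)
next
  case (Suc j)
  obtain ts where t: "t = Node ts" by (cases t)
  from Suc.prems(1) obtain i p where u: "u = i # p" and i: "i < length ts" and p: "p \<in> level (ts!i) j"
    by (auto simp: t level_Suc)
  have ne: "ts \<noteq> []" using i by auto
  let ?Ri = "\<lambda>q. R (i # q)"
  define f where "f = (\<lambda>s. blk lam j (?Ri(p := s)) (ts ! i))"
  define C where "C = (\<Prod>i'\<in>{..<length ts} - {i}. inverse (1 + blk lam j (\<lambda>q. R (i' # q)) (ts ! i')))"
  have def_i: "blk_defined lam j ?Ri (ts!i)" and nz: "1 + blk lam j ?Ri (ts!i) \<noteq> 0"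
    using Suc.prems(2) i by (auto simp: t)
  have IH: "(f has_real_derivative Dblk lam j ?Ri (ts!i) p) (at (R u))"
    using Suc.IH[OF p def_i] unfolding f_def u by (simp add: fun_upd_def)
  have f0: "f (R u) = blk lam j ?Ri (ts!i)"
    unfolding f_def u by (simp add: fun_upd_idem)
  have eq: "blk lam (Suc j) (R(u := s)) t = lam * (inverse (1 + f s) * C)" for s
  proof -
    have A: "(\<lambda>q. (R(u := s)) (i # q)) = ?Ri(p := s)" by (auto simp: u)
    have B: "i' \<noteq> i \<Longrightarrow> (\<lambda>q. (R(u := s)) (i' # q)) = (\<lambda>q. R (i' # q))" for i' by (auto simp: u)
    have "blk lam (Suc j) (R(u := s)) t =
       lam * (inverse (1 + blk lam j (\<lambda>q. (R(u := s)) (i # q)) (ts ! i)) *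
         (\<Prod>i'\<in>{..<length ts} - {i}. inverse (1 + blk lam j (\<lambda>q. (R(u := s)) (i' # q)) (ts ! i'))))"
      using ne i by (simp add: t prod.remove[of "{..<length ts}" i])
    also have "(\<Prod>i'\<in>{..<length ts} - {i}. inverse (1 + blk lam j (\<lambda>q. (R(u := s)) (i' # q)) (ts ! i'))) = C"
      unfolding C_def
    proof (rule prod.cong[OF refl])
      fix x assume "x \<in> {..<length ts} - {i}"
      then have "x \<noteq> i" by auto
      then show "inverse (1 + blk lam j (\<lambda>q. (R(u := s)) (x # q)) (ts ! x)) =
        inverse (1 + blk lam j (\<lambda>q. R (x # q)) (ts ! x))" using B[of x] by metis
    qed
    also have "blk lam j (\<lambda>q. (R(u := s)) (i # q)) (ts ! i) = f s"
      unfolding A f_def by simp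
    finally show ?thesis .
  qed
  have C0: "blk lam (Suc j) R t = lam * (inverse (1 + f (R u)) * C)"
    using eq[of "R u"] by simp
  have "((\<lambda>s. lam * (inverse (1 + f s) * C)) has_real_derivative
      lam * (- ((0 + Dblk lam j ?Ri (ts!i) p) * inverse ((1 + f (R u)) ^ Suc (Suc 0))) * C)) (at (R u))"
    by (intro DERIV_cmult DERIV_cmult_right DERIV_inverse_fun DERIV_add DERIV_const IH) (simp add: f0 nz)
  moreover have "lam * (- ((0 + Dblk lam j ?Ri (ts!i) p) * inverse ((1 + f (R u)) ^ Suc (Suc 0))) * C)
      = Dblk lam (Suc j) R t u"
  proof -
    have "Dblk lam (Suc j) R t u = - blk lam (Suc j) R t * inverse (1 + blk lam j ?Ri (ts!i)) * Dblk lam j ?Ri (ts!i) p"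
      unfolding u t by (rule Dblk.simps(2))
    then have Dform: "Dblk lam (Suc j) R t u = - (lam * (inverse (1 + f (R u)) * C)) * inverse (1 + f (R u)) * Dblk lam j ?Ri (ts!i) p"
      using C0 f0 by simp
    have sq: "inverse ((1 + f (R u)) ^ Suc (Suc 0)) = inverse (1 + f (R u)) * inverse (1 + f (R u))"
      by (metis inverse_mult_distrib power2_eq_square numeral_2_eq_2)
    show ?thesis unfolding Dform sq by (simp add: algebra_simps)
  qed
  ultimately have der: "((\<lambda>s. lam * (inverse (1 + f s) * C)) has_real_derivative Dblk lam (Suc j) R t u) (at (R u))"
    by simp
  have fe: "(\<lambda>s. blk lam (Suc j) (R(u := s)) t) = (\<lambda>s. lam * (inverse (1 + f s) * C))"
    by (intro ext eq)
  show ?case unfolding fe by (rule der)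
qed

definition Pw :: "real \<Rightarrow> real \<Rightarrow> nat \<Rightarrow> (nat list \<Rightarrow> real) \<Rightarrow> rtree \<Rightarrow> real" where
  "Pw lam a j R t = (\<Sum>u\<in>level t j. \<bar>Dblk lam j R t u\<bar> powr a * (1 + R u) powr a * ln (1 + R u))"

lemma P_bound:
  assumes lam: "0 < lam" and K: "0 \<le> K"
    and PV: "\<And>b. b \<in> {lam / (1+lam)^M..lam} \<Longrightarrow> b powr a * ln (lam / b) \<le> K * ((1 + b) powr a * ln (1 + b))"
  shows "degb M j t \<Longrightarrow> (\<forall>u\<in>level t j. R u \<in> {lam / (1+lam)^M..lam}) \<Longrightarrow>
    Pw lam a j R t \<le> K ^ j * ((1 + blk lam j R t) powr a * ln (1 + blk lam j R t))"
proof (induction j arbitrary: t R)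
  case 0
  then show ?case by (simp add: Pw_def level_0)
next
  case (Suc j)
  obtain ts where t: "t = Node ts" by (cases t)
  let ?lo = "lam / (1+lam)^M"
  have lo: "0 < ?lo" using lam by simp
  have inv: "blk_defined lam (Suc j) R t \<and> blk lam (Suc j) R t \<in> {?lo..lam}"
    using blk_inv[OF less_imp_le[OF lam] Suc.prems] .
  let ?b = "blk lam (Suc j) R t"
  have bpos: "0 < ?b" using inv lo by auto
  let ?bi = "\<lambda>i. blk lam j (\<lambda>p. R (i # p)) (ts ! i)"
  have chprems: "degb M j (ts!i) \<and> (\<forall>u\<in>level (ts!i) j. R (i # u) \<in> {?lo..lam})" if i: "i < length ts" for i
    using Suc.prems level_child[OF i] i by (auto simp: t)
  have chinv: "?bi i \<in> {?lo..lam}" if i: "i < length ts" for i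
    using blk_inv[OF less_imp_le[OF lam], of M j "ts!i" "\<lambda>p. R (i # p)"] chprems[OF i] by auto
  have bi_pos: "0 < ?bi i" if "i < length ts" for i using chinv[OF that] lo by auto
  show ?case
  proof (cases "ts = []")
    case True
    then have "level t (Suc j) = {}" by (simp add: t level_Suc)
    then have "Pw lam a (Suc j) R t = 0" by (simp add: Pw_def)
    moreover have "0 \<le> K ^ Suc j * ((1 + ?b) powr a * ln (1 + ?b))"
      using K bpos by (intro mult_nonneg_nonneg) auto
    ultimately show ?thesis by simp
  next
    case False
    have trm: "\<bar>Dblk lam (Suc j) R t (i # p)\<bar> powr a * (1 + R (i # p)) powr a * ln (1 + R (i # p))
       = (?b / (1 + ?bi i)) powr a * (\<bar>Dblk lam j (\<lambda>q. R (i # q)) (ts!i) p\<bar> powr a * (1 + R (i # p)) powr a * ln (1 + R (i # p)))"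
      if i: "i < length ts" for i p
    proof -
      have h: "\<bar>Dblk lam (Suc j) R t (i # p)\<bar> = (?b / (1 + ?bi i)) * \<bar>Dblk lam j (\<lambda>q. R (i # q)) (ts!i) p\<bar>"
        using bpos bi_pos[OF i] by (simp add: t abs_mult divide_inverse)
      have h2: "((?b / (1 + ?bi i)) * \<bar>Dblk lam j (\<lambda>q. R (i # q)) (ts!i) p\<bar>) powr a
          = (?b / (1 + ?bi i)) powr a * \<bar>Dblk lam j (\<lambda>q. R (i # q)) (ts!i) p\<bar> powr a"
        by (rule powr_mult)
      show ?thesis unfolding h h2 by (simp add: mult.assoc)
    qed
    have inner: "(\<Sum>p\<in>level (ts!i) j. \<bar>Dblk lam (Suc j) R t (i # p)\<bar> powr a * (1 + R (i # p)) powr a * ln (1 + R (i # p)))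
        \<le> K ^ j * (?b powr a * ln (1 + ?bi i))" if i: "i < length ts" for i
    proof -
      have "(\<Sum>p\<in>level (ts!i) j. \<bar>Dblk lam (Suc j) R t (i # p)\<bar> powr a * (1 + R (i # p)) powr a * ln (1 + R (i # p)))
         = (?b / (1 + ?bi i)) powr a * Pw lam a j (\<lambda>q. R (i # q)) (ts!i)"
        unfolding Pw_def by (simp add: trm[OF i] sum_distrib_left)
      also have "\<dots> \<le> (?b / (1 + ?bi i)) powr a * (K ^ j * ((1 + ?bi i) powr a * ln (1 + ?bi i)))"
        using Suc.IH[of "ts!i" "\<lambda>q. R (i # q)"] chprems[OF i] by (intro mult_left_mono) auto
      also have "\<dots> = K ^ j * (((?b / (1 + ?bi i)) powr a * (1 + ?bi i) powr a) * ln (1 + ?bi i))"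
        by (simp add: algebra_simps)
      also have "(?b / (1 + ?bi i)) powr a * (1 + ?bi i) powr a = ?b powr a"
        using bpos bi_pos[OF i] by (simp add: powr_divide)
      finally show ?thesis .
    qed
    have "Pw lam a (Suc j) R t \<le> (\<Sum>i<length ts. K ^ j * (?b powr a * ln (1 + ?bi i)))"
      unfolding Pw_def t sum_level_Suc by (rule sum_mono) (use inner in \<open>simp add: t\<close>)
    also have "\<dots> = K ^ j * (?b powr a * (\<Sum>i<length ts. ln (1 + ?bi i)))"
      by (simp add: sum_distrib_left)
    also have "(\<Sum>i<length ts. ln (1 + ?bi i)) = ln (\<Prod>i<length ts. (1 + ?bi i))"
    proof -
      have "\<And>i. i \<in> {..<length ts} \<Longrightarrow> 0 < 1 + ?bi i" using bi_pos by (smt (verit) lessThan_iff)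
      then show ?thesis by (subst ln_prod) (auto, metis lessThan_iff less_irrefl)
    qed
    also have "(\<Prod>i<length ts. (1 + ?bi i)) = lam / ?b"
    proof -
      have "?b = lam * (\<Prod>i<length ts. inverse (1 + ?bi i))" using False by (simp add: t)
      also have "(\<Prod>i<length ts. inverse (1 + ?bi i)) = inverse (\<Prod>i<length ts. (1 + ?bi i))"
        using prod_inversef[of "\<lambda>i. 1 + ?bi i" "{..<length ts}"] by (simp add: o_def)
      finally have "?b = lam / (\<Prod>i<length ts. (1 + ?bi i))" by (simp add: divide_inverse)
      moreover have "(\<Prod>i<length ts. (1 + ?bi i)) > 0" using bi_pos by (intro prod_pos) (auto intro: add_pos_pos)
      ultimately show ?thesis using bpos lam by (simp add: field_simps)
    qed
    also have "K ^ j * (?b powr a * ln (lam / ?b)) \<le> K ^ j * (K * ((1 + ?b) powr a * ln (1 + ?b)))"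
      using PV[of ?b] inv K by (intro mult_left_mono) auto
    finally show ?thesis by (simp add: algebra_simps)
  qed
qed

lemma ln1p_lower: "0 < (t::real) \<Longrightarrow> t / (1 + t) \<le> ln (1 + t)"
proof -
  assume t: "0 < t"
  have "ln (inverse (1 + t)) \<le> inverse (1 + t) - 1" using ln_le_minus_one[of "inverse (1+t)"] t by simp
  moreover have "ln (inverse (1 + t)) = - ln (1 + t)" using t by (simp add: ln_inverse)
  moreover have "inverse (1 + t) - 1 = - (t / (1 + t))" using t by (simp add: field_simps)
  ultimately show ?thesis by linarith
qed

lemma ln1p_div_antimono:
  fixes s t :: real
  assumes "0 < s" "s \<le> t"
  shows "ln (1 + t) / t \<le> ln (1 + s) / s"
proof (rule deriv_nonpos_imp_antimono[where a = s and b = t and g = "\<lambda>x. ln (1 + x) / x" and g' = "\<lambda>x. (x / (1 + x) - ln (1 + x)) / x^2"])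
  fix x assume x: "x \<in> {s..t}"
  then have x0: "0 < x" using assms by auto
  show "((\<lambda>x. ln (1 + x) / x) has_real_derivative (x / (1 + x) - ln (1 + x)) / x^2) (at x)"
    using x0 by (auto intro!: derivative_eq_intros simp: field_simps power2_eq_square)
  show "(x / (1 + x) - ln (1 + x)) / x^2 \<le> 0"
    using ln1p_lower[OF x0] x0 by (intro divide_nonpos_pos) auto
qed (use assms in auto)

definition aexp :: "real \<Rightarrow> real" where
  "aexp d = 2 / ((d - 1) * ln (d / (d - 1)))"

definition Om :: "real \<Rightarrow> real \<Rightarrow> real \<Rightarrow> real" where
  "Om d a t = ((1 + t) / t) powr a * ln (1 + t) + d powr (a - 1) * ln t"

lemma xs_facts:
  assumes d: "d > (1::real)"
  shows "1 / (d - 1) > 0" "1 + 1 / (d - 1) = d / (d - 1)" "(1 + 1/(d-1)) / (1/(d-1)) = d"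
    "d * (1/(d-1)) / (1 + 1/(d-1)) = 1"
  using d by (auto simp: field_simps)

lemma aexp_gt2:
  assumes d: "d > 1" shows "aexp d > 2"
proof -
  have xs: "1 / (d - 1) > 0" using d by simp
  have "ln (d / (d - 1)) = ln (1 + 1 / (d - 1))" using xs_facts[OF d] by simp
  also have "\<dots> < 1 / (d - 1)" by (rule ln_add_one_self_less_self[OF xs])
  finally have lt: "ln (d / (d - 1)) < 1 / (d - 1)" .
  have pos: "ln (d / (d - 1)) > 0" using d by simp
  have "(d - 1) * ln (d / (d - 1)) < 1" using lt d by (simp add: field_simps)
  moreover have "(d - 1) * ln (d / (d - 1)) > 0" using pos d by simp
  ultimately show ?thesis unfolding aexp_def by (simp add: field_simps)
qed

lemma alg_id:
  fixes x P L E a :: real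
  assumes "x > 0"
  shows "a * P * (- 1 / x^2) * L + 1 / (1 + x) * (P * ((1 + x) / x)) + P * E * (1 / x)
       = P * (1 - a * (L / x) + E) / x"
proof -
  have "1 + x \<noteq> 0" "x \<noteq> 0" "x + x * x \<noteq> 0" using assms by (auto, smt (verit) mult_pos_pos)
  then have e1: "1 / (1 + x) * (P * ((1 + x) / x)) = P / x" by simp
  have e2: "a * P * (- 1 / x^2) * L = - (a * P * (L / x) / x)" by (simp add: power2_eq_square)
  have e3: "P * (1 - a * (L / x) + E) / x = P / x - a * P * (L / x) / x + P * E / x"
    by (simp add: algebra_simps add_divide_distrib diff_divide_distrib)
  show ?thesis unfolding e1 e2 e3 by simp
qed

lemma Om_deriv:
  assumes x: "x > 0"
  shows "(Om d a has_real_derivative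
     ((1 + x) / x) powr (a - 1) * (1 - a * (ln (1 + x) / x) + (d * x / (1 + x)) powr (a - 1)) / x) (at x)"
proof -
  have h1: "((\<lambda>x. (1 + x) / x) has_real_derivative - 1 / x^2) (at x)"
    using x by (auto intro!: derivative_eq_intros simp: field_simps power2_eq_square)
  have h2: "((\<lambda>x. ((1 + x) / x) powr a) has_real_derivative a * ((1 + x) / x) powr (a - 1) * (- 1 / x^2)) (at x)"
    using DERIV_fun_powr[OF h1, of a] x by simp
  have h3: "((\<lambda>x. ln (1 + x)) has_real_derivative 1 / (1 + x)) (at x)"
    using x by (auto intro!: derivative_eq_intros)
  have h4: "(ln has_real_derivative 1 / x) (at x)"
    using x by (auto intro!: derivative_eq_intros)
  have D: "(Om d a has_real_derivative
     a * ((1 + x) / x) powr (a - 1) * (- 1 / x^2) * ln (1 + x) + 1 / (1 + x) * ((1 + x) / x) powr a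
      + d powr (a - 1) * (1 / x)) (at x)"
    unfolding Om_def[abs_def]
    by (intro DERIV_add DERIV_mult h2 h3 DERIV_cmult h4)
  let ?P = "((1 + x) / x) powr (a - 1)"
  have P: "((1 + x) / x) powr a = ?P * ((1 + x) / x)"
    using x by (simp add: powr_diff)
  have Dd: "d powr (a - 1) = ?P * (d * x / (1 + x)) powr (a - 1)"
  proof -
    have "?P * (d * x / (1 + x)) powr (a - 1) = ((1 + x) / x * (d * x / (1 + x))) powr (a - 1)"
      by (rule powr_mult[symmetric])
    also have "(1 + x) / x * (d * x / (1 + x)) = d" using x by (simp add: divide_simps)
    finally show ?thesis by simp
  qed
  have "a * ((1 + x) / x) powr (a - 1) * (- 1 / x^2) * ln (1 + x) + 1 / (1 + x) * ((1 + x) / x) powr a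
      + d powr (a - 1) * (1 / x)
     = ?P * (1 - a * (ln (1 + x) / x) + (d * x / (1 + x)) powr (a - 1)) / x"
  proof -
    have x1: "1 + x > 0" "x \<noteq> 0" using x by auto
    show ?thesis unfolding P Dd by (rule alg_id[OF x])
  qed
  with D show ?thesis by simp
qed

lemma Om_min:
  assumes d: "d > 1" and t: "t > 0"
  shows "Om d (aexp d) (1 / (d - 1)) \<le> Om d (aexp d) t"
proof -
  define a where "a = aexp d"
  define xs where "xs = 1 / (d - 1)"
  have a2: "a > 2" using aexp_gt2[OF d] by (simp add: a_def)
  have xs0: "xs > 0" using d by (simp add: xs_def)
  define T where "T x = 1 - a * (ln (1 + x) / x) + (d * x / (1 + x)) powr (a - 1)" for x
  have axs: "a * (ln (1 + xs) / xs) = 2"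
  proof -
    have "ln (1 + xs) = ln (d / (d - 1))" using xs_facts[OF d] by (simp add: xs_def)
    moreover have "ln (d / (d - 1)) > 0" using d by simp
    ultimately show ?thesis using d by (simp add: a_def aexp_def xs_def field_simps)
  qed
  have dxs: "d * xs / (1 + xs) = 1" using xs_facts[OF d] by (simp add: xs_def)
  have der: "(Om d a has_real_derivative ((1 + x) / x) powr (a - 1) * T x / x) (at x)" if "x > 0" for x
    using Om_deriv[OF that, of d a] by (simp add: T_def)
  have Tle: "T x \<le> 0" if "0 < x" "x \<le> xs" for x
  proof -
    have "ln (1 + xs) / xs \<le> ln (1 + x) / x" by (rule ln1p_div_antimono) (use that in auto)
    then have "a * (ln (1 + xs) / xs) \<le> a * (ln (1 + x) / x)" using a2 by (intro mult_left_mono) auto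
    then have "2 \<le> a * (ln (1 + x) / x)" using axs by simp
    moreover have "(d * x / (1 + x)) powr (a - 1) \<le> 1"
    proof (rule powr_le1)
      show "0 \<le> a - 1" using a2 by simp
      have "d * x \<le> 1 + x" using that d by (simp add: xs_def field_simps)
      then show "\<bar>d * x / (1 + x)\<bar> \<le> 1" using that d by (simp add: field_simps)
    qed
    ultimately show ?thesis by (simp add: T_def)
  qed
  have Tge: "T x \<ge> 0" if "xs \<le> x" for x
  proof -
    have x0: "0 < x" using that xs0 by simp
    have "ln (1 + x) / x \<le> ln (1 + xs) / xs" by (rule ln1p_div_antimono) (use that xs0 in auto)
    then have "a * (ln (1 + x) / x) \<le> a * (ln (1 + xs) / xs)" using a2 by (intro mult_left_mono) auto
    then have "a * (ln (1 + x) / x) \<le> 2" using axs by simp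
    moreover have "1 \<le> (d * x / (1 + x)) powr (a - 1)"
    proof (rule ge_one_powr_ge_zero)
      show "0 \<le> a - 1" using a2 by simp
      have "1 + x \<le> d * x" using that d x0 by (simp add: xs_def field_simps)
      then show "1 \<le> d * x / (1 + x)" using x0 by (simp add: field_simps)
    qed
    ultimately show ?thesis by (simp add: T_def)
  qed
  show ?thesis
  proof (cases "t \<le> xs")
    case True
    have "Om d a xs \<le> Om d a t"
    proof (rule deriv_nonpos_imp_antimono[where a = t and b = xs and g = "Om d a"
          and g' = "\<lambda>x. ((1 + x) / x) powr (a - 1) * T x / x"])
      fix x assume x: "x \<in> {t..xs}"
      then have x0: "x > 0" using t by auto
      show "(Om d a has_real_derivative ((1 + x) / x) powr (a - 1) * T x / x) (at x)" by (rule der[OF x0])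
      have "T x \<le> 0" using Tle x0 x by auto
      then show "((1 + x) / x) powr (a - 1) * T x / x \<le> 0"
        using x0 by (simp add: mult_nonneg_nonpos divide_nonpos_pos)
    qed (use True in auto)
    then show ?thesis by (simp add: a_def xs_def)
  next
    case False
    have "Om d a xs \<le> Om d a t"
    proof (rule deriv_nonneg_imp_mono[where a = xs and b = t and g = "Om d a"
          and g' = "\<lambda>x. ((1 + x) / x) powr (a - 1) * T x / x"])
      fix x assume x: "x \<in> {xs..t}"
      then have x0: "x > 0" using xs0 by auto
      show "(Om d a has_real_derivative ((1 + x) / x) powr (a - 1) * T x / x) (at x)" by (rule der[OF x0])
      have "T x \<ge> 0" using Tge x by auto
      then show "((1 + x) / x) powr (a - 1) * T x / x \<ge> 0"
        using x0 by simp
    qed (use False in auto)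
    then show ?thesis by (simp add: a_def xs_def)
  qed
qed

lemma Om_xs:
  assumes d: "d > 1"
  shows "Om d a (1 / (d - 1)) = d powr (a - 1) * ln (lambda_c d)"
proof -
  have l1: "ln (1 + 1 / (d - 1)) = ln d - ln (d - 1)"
    using xs_facts[OF d] d by (simp add: ln_div)
  have l2: "ln (1 / (d - 1)) = - ln (d - 1)" using d by (simp add: ln_div)
  have l3: "ln (lambda_c d) = d * ln d - (d + 1) * ln (d - 1)"
    using d by (simp add: lambda_c_def ln_div)
  have p: "d powr a = d powr (a - 1) * d" using d by (simp add: powr_diff)
  show ?thesis
    unfolding Om_def xs_facts(3)[OF d] l1 l2 l3 p by (simp add: algebra_simps)
qed

lemma key_ineq:
  assumes d: "d > 1" and b: "b > 0"
  shows "d powr (aexp d - 1) * b powr (aexp d) * (ln (lambda_c d) - ln b) \<le> (1 + b) powr (aexp d) * ln (1 + b)"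
proof -
  let ?a = "aexp d"
  have "d powr (?a - 1) * ln (lambda_c d) \<le> ((1 + b) / b) powr ?a * ln (1 + b) + d powr (?a - 1) * ln b"
    using Om_min[OF d b] Om_xs[OF d, of ?a] by (simp add: Om_def)
  then have "d powr (?a - 1) * (ln (lambda_c d) - ln b) \<le> ((1 + b) / b) powr ?a * ln (1 + b)"
    by (simp add: algebra_simps)
  then have "b powr ?a * (d powr (?a - 1) * (ln (lambda_c d) - ln b)) \<le> b powr ?a * (((1 + b) / b) powr ?a * ln (1 + b))"
    by (rule mult_left_mono) simp
  also have "b powr ?a * (((1 + b) / b) powr ?a * ln (1 + b)) = (1 + b) powr ?a * ln (1 + b)"
    using b by (simp add: powr_divide)
  finally show ?thesis by (simp add: algebra_simps)
qed

lemma pervertex: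
  assumes d: "d > 1" and lam: "0 < lam" "lam < lambda_c d" and lo: "0 < lo" "lo \<le> lam"
  defines "a \<equiv> aexp d"
  defines "c \<equiv> 1 - min (1/2) (d powr (a - 1) * lo powr a * (ln (lambda_c d) - ln lam) / ((1 + lam) powr a * ln (1 + lam)))"
  shows "0 < c" "c < 1"
    "\<And>b. b \<in> {lo..lam} \<Longrightarrow> b powr a * ln (lam / b) \<le> (c * d powr (1 - a)) * ((1 + b) powr a * ln (1 + b))"
proof -
  have lc: "lambda_c d > 0" using lam by linarith
  have a2: "a > 2" using aexp_gt2[OF d] by (simp add: a_def)
  define \<delta> where "\<delta> = ln (lambda_c d) - ln lam"
  have \<delta>: "\<delta> > 0" using lam lc by (simp add: \<delta>_def)
  define Em where "Em = (1 + lam) powr a * ln (1 + lam)"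
  have Em: "Em > 0" using lam by (simp add: Em_def)
  define X where "X = d powr (a - 1) * lo powr a * \<delta> / Em"
  have X: "X > 0" using \<delta> Em lo d by (simp add: X_def)
  have cX: "c = 1 - min (1/2) X" by (simp add: c_def X_def \<delta>_def Em_def)
  show "0 < c" "c < 1" using X by (auto simp: cX)
  fix b assume bb: "b \<in> {lo..lam}"
  then have b: "b > 0" "lo \<le> b" "b \<le> lam" using lo by auto
  define E where "E = (1 + b) powr a * ln (1 + b)"
  have E0: "0 \<le> E" using b by (simp add: E_def)
  have EEm: "E \<le> Em"
    unfolding E_def Em_def
    by (intro mult_mono powr_mono2) (use b a2 in auto)
  have key: "d powr (a - 1) * b powr a * (ln (lam / b) + \<delta>) \<le> E"
    using key_ineq[OF d b(1)] b lam by (simp add: a_def E_def \<delta>_def ln_div)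
  have "(1 - c) * E \<le> X * E" using E0 by (intro mult_right_mono) (auto simp: cX)
  also have "\<dots> \<le> X * Em" using X EEm by (intro mult_left_mono) auto
  also have "\<dots> = d powr (a - 1) * lo powr a * \<delta>" using Em by (simp add: X_def)
  also have "\<dots> \<le> d powr (a - 1) * b powr a * \<delta>"
    using \<delta> b lo by (intro mult_right_mono mult_left_mono powr_mono2) (use a2 in auto)
  finally have A: "(1 - c) * E \<le> d powr (a - 1) * b powr a * \<delta>" .
  have B: "d powr (a - 1) * (b powr a * ln (lam / b)) \<le> c * E"
    using key A by (simp add: algebra_simps)
  have dd: "d powr (1 - a) * d powr (a - 1) = 1" using d by (simp add: powr_add[symmetric])
  have "b powr a * ln (lam / b) = d powr (1 - a) * (d powr (a - 1) * (b powr a * ln (lam / b)))"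
    using dd by (simp add: mult.assoc[symmetric])
  also have "\<dots> \<le> d powr (1 - a) * (c * E)" using B by (intro mult_left_mono) auto
  finally show "b powr a * ln (lam / b) \<le> (c * d powr (1 - a)) * ((1 + b) powr a * ln (1 + b))"
    by (simp add: E_def algebra_simps)
qed

definition phi :: "real \<Rightarrow> real \<Rightarrow> real" where
  "phi be x = ln (1 + x) powr be"

lemma Re_pos_not_nonpos: "0 < Re w \<Longrightarrow> w \<notin> \<real>\<^sub>\<le>\<^sub>0"
  by (auto elim!: nonpos_Reals_cases)

lemma Re_mult_ofr: "Re (z * complex_of_real r) = Re z * r" by simp

lemma phi_analytic:
  assumes S: "S \<subseteq> {0<..}"
  shows "real_analytic_on (phi be) S"
  unfolding real_analytic_on_def
proof
  fix x0 assume "x0 \<in> S"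
  then have x0: "x0 > 0" using S by auto
  define F where "F z = exp (of_real be * Ln (Ln (1 + z)))" for z :: complex
  have Rez: "0 < Re z" if "z \<in> ball (of_real x0) x0" for z :: complex
  proof -
    have "\<bar>Re z - x0\<bar> \<le> cmod (z - of_real x0)" using abs_Re_le_cmod[of "z - of_real x0"] by simp
    moreover have "cmod (z - of_real x0) < x0" using that by (simp add: dist_norm norm_minus_commute)
    ultimately show ?thesis by linarith
  qed
  have hol: "F holomorphic_on ball (of_real x0) x0"
  proof -
    have A: "1 + z \<notin> \<real>\<^sub>\<le>\<^sub>0" if "z \<in> ball (of_real x0) x0" for z :: complex
      using Rez[OF that] by (intro Re_pos_not_nonpos) simp
    have B: "Ln (1 + z) \<notin> \<real>\<^sub>\<le>\<^sub>0" if "z \<in> ball (of_real x0) x0" for z :: complex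
    proof (rule Re_pos_not_nonpos)
      have r1: "1 < Re (1 + z)" using Rez[OF that] by simp
      also have "\<dots> \<le> cmod (1 + z)" by (rule complex_Re_le_cmod)
      finally have "1 < cmod (1 + z)" .
      moreover have "1 + z \<noteq> 0"
      proof
        assume "1 + z = 0"
        then have "Re (1 + z) = 0" by simp
        with r1 show False by simp
      qed
      ultimately show "0 < Re (Ln (1 + z))" by simp
    qed
    show ?thesis unfolding F_def[abs_def] using A B
      by (intro holomorphic_intros) auto
  qed
  have ser: "(\<lambda>n. Re ((deriv ^^ n) F (of_real x0) / fact n) * (y - x0) ^ n) sums phi be y"
    if y: "\<bar>y - x0\<bar> < x0" for y
  proof -
    have yb: "of_real y \<in> ball (of_real x0 :: complex) x0"
    proof -
      have "cmod (complex_of_real x0 - complex_of_real y) = \<bar>x0 - y\<bar>"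
        by (metis norm_of_real of_real_diff)
      then show ?thesis using y by (simp add: dist_norm abs_minus_commute)
    qed
    have s: "(\<lambda>n. (deriv ^^ n) F (of_real x0) / fact n * (of_real y - of_real x0)^n) sums F (of_real y)"
      by (rule holomorphic_power_series[OF hol yb])
    have y0: "y > 0" using y by linarith
    have Fy: "F (of_real y) = of_real (phi be y)"
    proof -
      have l1: "Ln (1 + of_real y) = of_real (ln (1 + y))"
        using Ln_of_real[of "1 + y"] y0 by simp
      have l2: "Ln (of_real (ln (1 + y))) = of_real (ln (ln (1 + y)))"
        using Ln_of_real[of "ln (1 + y)"] y0 by simp
      have "F (of_real y) = exp (of_real (be * ln (ln (1 + y))))"
        unfolding F_def l1 l2 by simp
      also have "\<dots> = of_real (exp (be * ln (ln (1 + y))))" by (simp only: of_real_exp)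
      also have "exp (be * ln (ln (1 + y))) = phi be y"
        using y0 by (simp add: phi_def powr_def)
      finally show ?thesis .
    qed
    have sR: "(\<lambda>n. Re ((deriv ^^ n) F (of_real x0) / fact n * (of_real y - of_real x0)^n)) sums Re (F (of_real y))"
      by (rule sums_Re[OF s])
    have eqn: "Re ((deriv ^^ n) F (of_real x0) / fact n * (of_real y - of_real x0)^n)
        = Re ((deriv ^^ n) F (of_real x0) / fact n) * (y - x0) ^ n" for n
    proof -
      have e: "(of_real y - of_real x0 :: complex)^n = of_real ((y - x0)^n)" by simp
      show ?thesis unfolding e by (rule Re_mult_ofr)
    qed
    have eqf: "(\<lambda>n. Re ((deriv ^^ n) F (of_real x0) / fact n * (of_real y - of_real x0)^n))
        = (\<lambda>n. Re ((deriv ^^ n) F (of_real x0) / fact n) * (y - x0) ^ n)"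
      by (rule ext) (rule eqn)
    show ?thesis using sR unfolding eqf Fy Re_complex_of_real .
  qed
  show "\<exists>r>0. \<exists>c. \<forall>y. \<bar>y - x0\<bar> < r \<longrightarrow> (\<lambda>n. c n * (y - x0) ^ n) sums phi be y"
  proof (intro exI conjI allI impI)
    show "0 < x0" by (rule x0)
    fix y assume "\<bar>y - x0\<bar> < x0"
    then show "(\<lambda>n. Re ((deriv ^^ n) F (of_real x0) / fact n) * (y - x0) ^ n) sums phi be y" by (rule ser)
  qed
qed

definition phinv :: "real \<Rightarrow> real \<Rightarrow> real" where
  "phinv be y = exp (y powr (1 / be)) - 1"

lemma phi_pos: "0 < x \<Longrightarrow> 0 < phi be x"
  by (simp add: phi_def)

lemma phi_less: "0 < be \<Longrightarrow> 0 < x \<Longrightarrow> x < y \<Longrightarrow> phi be x < phi be y"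
  unfolding phi_def by (rule powr_less_mono2) auto

lemma phi_inj: "0 < be \<Longrightarrow> S \<subseteq> {0<..} \<Longrightarrow> inj_on (phi be) S"
  by (rule inj_onI, rule ccontr) (auto simp: neq_iff dest: phi_less[of be])

lemma phi_deriv: "0 < x \<Longrightarrow> (phi be has_real_derivative be * ln (1 + x) powr (be - 1) * (1 / (1 + x))) (at x)"
proof -
  assume x: "0 < x"
  have "((\<lambda>x. ln (1 + x)) has_real_derivative 1 / (1 + x)) (at x)"
    using x by (auto intro!: derivative_eq_intros)
  from DERIV_fun_powr[OF this, of be] x show ?thesis
    unfolding phi_def[abs_def] by simp
qed

lemma phi_deriv_pos: "0 < be \<Longrightarrow> 0 < (x::real) \<Longrightarrow> 0 < be * ln (1 + x) powr (be - 1) * (1 / (1 + x))"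
proof -
  assume "0 < be" "0 < x"
  then have "0 < ln (1 + x)" by simp
  then show ?thesis using \<open>0 < be\<close> \<open>0 < x\<close> by (intro mult_pos_pos) auto
qed

lemma phinv_phi: "0 < be \<Longrightarrow> 0 < x \<Longrightarrow> phinv be (phi be x) = x"
  by (simp add: phinv_def phi_def powr_powr)

lemma phinv_deriv: "0 < y \<Longrightarrow>
  (phinv be has_real_derivative exp (y powr (1 / be)) * ((1 / be) * y powr (1 / be - 1))) (at y)"
proof -
  assume y: "0 < y"
  have "((\<lambda>y. y powr (1 / be)) has_real_derivative (1 / be) * y powr (1 / be - 1)) (at y)"
    using DERIV_fun_powr[OF DERIV_ident, of y "1 / be"] y by simp
  then have "((\<lambda>y. exp (y powr (1 / be))) has_real_derivative exp (y powr (1 / be)) * ((1 / be) * y powr (1 / be - 1))) (at y)"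
    by (rule DERIV_chain2[OF DERIV_exp])
  from DERIV_diff[OF this DERIV_const[of 1]] show ?thesis unfolding phinv_def[abs_def] by simp
qed

lemma power_mean_pos:
  fixes g :: "'a \<Rightarrow> real"
  assumes S: "finite S" "S \<noteq> {}" and g: "\<And>u. u \<in> S \<Longrightarrow> 0 < g u" and a: "a \<ge> 1"
  shows "(\<Sum>u\<in>S. g u) powr a \<le> real (card S) powr (a - 1) * (\<Sum>u\<in>S. g u powr a)"
proof -
  define N where "N = real (card S)"
  have N: "N > 0" using S by (simp add: N_def card_gt_0_iff)
  have "(\<lambda>x. x powr a) (\<Sum>u\<in>S. (1 / N) *\<^sub>R g u) \<le> (\<Sum>u\<in>S. (1 / N) * (\<lambda>x. x powr a) (g u))"
    by (rule convex_on_sum[OF S powr_convex[OF a]]) (use g N in \<open>auto simp: N_def\<close>)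
  then have A: "((\<Sum>u\<in>S. g u) / N) powr a \<le> (\<Sum>u\<in>S. g u powr a) / N"
    by (simp add: sum_distrib_left[symmetric] sum_divide_distrib[symmetric])
  have "(\<Sum>u\<in>S. g u) powr a = (N * ((\<Sum>u\<in>S. g u) / N)) powr a" using N by simp
  also have "\<dots> = N powr a * ((\<Sum>u\<in>S. g u) / N) powr a" by (rule powr_mult)
  also have "\<dots> \<le> N powr a * ((\<Sum>u\<in>S. g u powr a) / N)" using A by (intro mult_left_mono) auto
  also have "\<dots> = N powr (a - 1) * (\<Sum>u\<in>S. g u powr a)"
    using N by (simp add: powr_diff)
  finally show ?thesis by (simp add: N_def)
qed

lemma power_mean:
  fixes g :: "'a \<Rightarrow> real"
  assumes S: "finite S" and g: "\<And>u. u \<in> S \<Longrightarrow> 0 \<le> g u" and a: "a \<ge> 1"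
  shows "(\<Sum>u\<in>S. g u) powr a \<le> real (card S) powr (a - 1) * (\<Sum>u\<in>S. g u powr a)"
proof -
  define S' where "S' = {u \<in> S. 0 < g u}"
  have fS': "finite S'" using S by (simp add: S'_def)
  have sub: "S' \<subseteq> S" by (auto simp: S'_def)
  have s1: "(\<Sum>u\<in>S. g u) = (\<Sum>u\<in>S'. g u)"
    by (rule sum.mono_neutral_right[OF S sub]) (use g in \<open>force simp: S'_def\<close>)
  have s2: "(\<Sum>u\<in>S'. g u powr a) \<le> (\<Sum>u\<in>S. g u powr a)"
    by (rule sum_mono2[OF S sub]) auto
  have c: "real (card S') powr (a - 1) \<le> real (card S) powr (a - 1)"
    using card_mono[OF S sub] a by (intro powr_mono2) auto
  show ?thesis
  proof (cases "S' = {}")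
    case True
    then have "(\<Sum>u\<in>S. g u) = 0" using s1 by simp
    then show ?thesis by (simp add: sum_nonneg)
  next
    case False
    have "(\<Sum>u\<in>S. g u) powr a \<le> real (card S') powr (a - 1) * (\<Sum>u\<in>S'. g u powr a)"
      unfolding s1 by (rule power_mean_pos[OF fS' False _ a]) (auto simp: S'_def)
    also have "\<dots> \<le> real (card S) powr (a - 1) * (\<Sum>u\<in>S. g u powr a)"
      by (intro mult_mono c s2) (auto intro: sum_nonneg)
    finally show ?thesis .
  qed
qed

lemma alg_gen:
  fixes be B C Dv E A :: real
  assumes "be \<noteq> 0" "B \<noteq> 0" "C \<noteq> 0"
  shows "be * (1 / B) * (1 / C) * (Dv * (E * ((1 / be) * A))) = Dv * (E * A / (C * B))"
  using assms by (simp add: field_simps)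

lemma D_alg:
  fixes a be r bb Dv :: real
  assumes a: "a > 2" and be: "be = 1 - 1 / a" and r: "r > 0" and bb: "bb > 0"
  shows "\<bar>be * ln (1 + bb) powr (be - 1) * (1 / (1 + bb)) *
     (Dv * (exp ((ln (1 + r) powr be) powr (1 / be)) * ((1 / be) * (ln (1 + r) powr be) powr (1 / be - 1))))\<bar>
   = \<bar>Dv\<bar> * (1 + r) * ln (1 + r) powr (1 / a) / ((1 + bb) * ln (1 + bb) powr (1 / a))"
proof -
  have "1 / a < 1" using a by simp
  then have be0: "be > 0" using be by simp
  have lr: "ln (1 + r) > 0" using r by simp
  have lb: "ln (1 + bb) > 0" using bb by simp
  have e1: "(ln (1 + r) powr be) powr (1 / be) = ln (1 + r)" using be0 lr by (simp add: powr_powr)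
  have e2: "(ln (1 + r) powr be) powr (1 / be - 1) = ln (1 + r) powr (1 / a)"
  proof -
    have "be * (1 / be - 1) = 1 - be" using be0 by (simp add: field_simps)
    also have "\<dots> = 1 / a" using be by simp
    finally have "be * (1 / be - 1) = 1 / a" .
    then show ?thesis using lr by (simp add: powr_powr)
  qed
  have e3: "ln (1 + bb) powr (be - 1) = 1 / ln (1 + bb) powr (1 / a)"
    using be lb by (simp add: powr_minus_divide[symmetric])
  have e4: "exp (ln (1 + r)) = 1 + r" using r by simp
  define A where "A = ln (1 + r) powr (1 / a)"
  define B where "B = ln (1 + bb) powr (1 / a)"
  have A0: "A > 0" using lr by (simp add: A_def)
  have B0: "B > 0" using lb by (simp add: B_def)
  have alg: "be * (1 / B) * (1 / (1 + bb)) * (Dv * ((1 + r) * ((1 / be) * A))) = Dv * ((1 + r) * A / ((1 + bb) * B))"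
    by (rule alg_gen) (use be0 B0 bb in auto)
  have Q: "(1 + r) * A / ((1 + bb) * B) \<ge> 0" using A0 B0 r bb by simp
  have "\<bar>Dv * ((1 + r) * A / ((1 + bb) * B))\<bar> = \<bar>Dv\<bar> * ((1 + r) * A / ((1 + bb) * B))"
    using Q by (simp only: abs_mult abs_of_nonneg)
  then show ?thesis unfolding e1 e2 e3 e4 A_def[symmetric] B_def[symmetric] alg
    by (simp add: mult.assoc)
qed

lemma g_pow:
  fixes a X r bb :: real
  assumes a: "a > 0" and X: "X \<ge> 0" and r: "r > 0" and bb: "bb > 0"
  shows "(X * (1 + r) * ln (1 + r) powr (1 / a) / ((1 + bb) * ln (1 + bb) powr (1 / a))) powr a
    = X powr a * (1 + r) powr a * ln (1 + r) / ((1 + bb) powr a * ln (1 + bb))"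
proof -
  have lr: "ln (1 + r) > 0" using r by simp
  have lb: "ln (1 + bb) > 0" using bb by simp
  have p1: "(ln (1 + r) powr (1 / a)) powr a = ln (1 + r)" using a lr by (simp add: powr_powr)
  have p2: "(ln (1 + bb) powr (1 / a)) powr a = ln (1 + bb)" using a lb by (simp add: powr_powr)
  show ?thesis
    using X r bb lr lb by (simp add: powr_divide powr_mult p1 p2)
qed

lemma blk_zero: "blk 0 (Suc j) R t = 0"
  by (cases t) simp

lemma case_zero:
  fixes k :: nat and d :: real
  assumes k: "k \<ge> 1" and d: "d > 1"
  shows "real_block_contraction 0 k d"
  unfolding real_block_contraction_def
proof (intro exI conjI)
  show "(0::real) \<le> 0" by simp
  show "(0::real) \<in> {0..0}" by simp
  show "- 1 \<notin> {0::real..0}" by simp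
  show "real_analytic_on id {0..0}"
    unfolding real_analytic_on_def
  proof
    fix x :: real assume "x \<in> {0..0}"
    then have x: "x = 0" by simp
    show "\<exists>r>0. \<exists>c. \<forall>y. \<bar>y - x\<bar> < r \<longrightarrow> (\<lambda>n. c n * (y - x) ^ n) sums id y"
    proof (intro exI[of _ 1] conjI exI[of _ "\<lambda>n. if n = 1 then 1 else 0"] allI impI)
      fix y :: real
      have "(\<lambda>n. (if n = 1 then 1 else 0) * (y - x) ^ n) = (\<lambda>n. if n = 1 then y ^ n else 0)"
        by (auto simp: x)
      moreover have "(\<lambda>n. if n = 1 then y ^ n else 0) sums y ^ 1" by (rule sums_single)
      ultimately show "(\<lambda>n. (if n = 1 then 1 else 0) * (y - x) ^ n) sums id y" by simp
    qed simp
  qed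
  show "inj_on id {0::real..0}" by simp
  show "\<forall>x\<in>{0::real..0}. deriv id x \<noteq> 0"
    using DERIV_imp_deriv[OF DERIV_ident] by (simp add: id_def)
  show "\<forall>T\<in>tree_class k d. \<forall>R. (\<forall>u\<in>level T k. R u \<in> {0..0}) \<longrightarrow>
      blk_defined 0 k R T \<and> blk 0 k R T \<in> {0..0}"
  proof (intro ballI allI impI)
    fix T R assume T: "T \<in> tree_class k d" and R: "\<forall>u\<in>level T k. R u \<in> {0::real..0}"
    have dg: "degb (nat \<lfloor>d ^ k\<rfloor>) k T" using class_degb[OF k _ T] d by simp
    have "\<forall>u\<in>level T k. R u \<in> {0 / (1 + 0) ^ nat \<lfloor>d ^ k\<rfloor>..0}" using R by simp
    from blk_inv[of 0, OF _ dg this] show "blk_defined 0 k R T \<and> blk 0 k R T \<in> {0..0}" by simp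
  qed
  show "(1/2::real) > 0" by simp
  show "\<forall>T\<in>tree_class k d. \<forall>x. (\<forall>u\<in>level T k. x u \<in> id ` {0..0}) \<longrightarrow>
       (\<exists>D. (\<forall>u\<in>level T k. ((\<lambda>t. blk_phi 0 k id {0..0} (x(u := t)) T) has_real_derivative D u)
                (at (x u) within id ` {0..0})) \<and> (\<Sum>u\<in>level T k. \<bar>D u\<bar>) \<le> 1 - 1/2)"
  proof (intro ballI allI impI exI[of _ "\<lambda>_. 0"] conjI)
    fix T x u
    obtain j where kj: "k = Suc j" using k by (cases k) auto
    have "(\<lambda>t. blk_phi 0 k id {0..0} (x(u := t)) T) = (\<lambda>t. 0)"
      by (simp add: blk_phi_def kj blk_zero)
    then show "((\<lambda>t. blk_phi 0 k id {0..0} (x(u := t)) T) has_real_derivative 0) (at (x u) within id ` {0..0})"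
      by simp
  qed simp
qed

lemma case_pos:
  fixes k :: nat and d lam :: real
  assumes k: "k \<ge> 1" and d: "d > 1" and lam: "0 < lam" and lamc: "lam < lambda_c d"
  shows "real_block_contraction lam k d"
proof -
  define a where "a = aexp d"
  have a2: "a > 2" using aexp_gt2[OF d] by (simp add: a_def)
  define be where "be = 1 - 1 / a"
  have "1 / a < 1" using a2 by simp
  then have be0: "be > 0" by (simp add: be_def)
  define M where "M = nat \<lfloor>d ^ k\<rfloor>"
  define lo where "lo = lam / (1 + lam) ^ M"
  have lo0: "0 < lo" using lam by (simp add: lo_def)
  have "1 \<le> (1 + lam) ^ M" using lam by (simp add: one_le_power)
  then have lolam: "lo \<le> lam" using lam unfolding lo_def by (simp add: divide_le_eq mult_le_cancel_left1 mult_left_le)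
  define c where "c = 1 - min (1/2) (d powr (a - 1) * lo powr a * (ln (lambda_c d) - ln lam) / ((1 + lam) powr a * ln (1 + lam)))"
  have c0: "0 < c" and c1: "c < 1"
    and PV: "\<And>b. b \<in> {lo..lam} \<Longrightarrow> b powr a * ln (lam / b) \<le> (c * d powr (1 - a)) * ((1 + b) powr a * ln (1 + b))"
    using pervertex[OF d lam lamc lo0 lolam] unfolding a_def[symmetric] c_def[symmetric] by auto
  define K where "K = c * d powr (1 - a)"
  have K0: "0 \<le> K" using c0 by (simp add: K_def)
  define J where "J = {lo..lam}"
  have Jpos: "J \<subseteq> {0<..}" using lo0 by (auto simp: J_def)
  have inj: "inj_on (phi be) J" by (rule phi_inj[OF be0 Jpos])
  define \<eta> where "\<eta> = 1 - c powr (1 / a)"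
  have cpow: "c powr (1 / a) < 1"
  proof -
    have "c powr (1 / a) < 1 powr (1 / a)" using c0 c1 a2 by (intro powr_less_mono2) auto
    then show ?thesis by simp
  qed
  have eta0: "\<eta> > 0" using cpow by (simp add: \<eta>_def)
  have inv: "blk_defined lam k R T \<and> blk lam k R T \<in> J"
    if T: "T \<in> tree_class k d" and R: "\<forall>u\<in>level T k. R u \<in> J" for T R
  proof -
    have dg: "degb M k T" using class_degb[OF k _ T] d by (simp add: M_def)
    show ?thesis using blk_inv[OF less_imp_le[OF lam] dg] R by (simp add: J_def lo_def)
  qed
  have main: "\<exists>D. (\<forall>u\<in>level T k. ((\<lambda>t. blk_phi lam k (phi be) J (x(u := t)) T) has_real_derivative D u)
                (at (x u) within phi be ` J)) \<and> (\<Sum>u\<in>level T k. \<bar>D u\<bar>) \<le> 1 - \<eta>"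
    if T: "T \<in> tree_class k d" and hx: "\<forall>u\<in>level T k. x u \<in> phi be ` J" for T x
  proof -
    define R0 where "R0 w = the_inv_into J (phi be) (x w)" for w
    have R0J: "R0 u \<in> J" if "u \<in> level T k" for u
      unfolding R0_def by (rule the_inv_into_into[OF inj]) (use hx that in auto)
    have xR0: "x u = phi be (R0 u)" if "u \<in> level T k" for u
      unfolding R0_def by (rule f_the_inv_into_f[OF inj, symmetric]) (use hx that in auto)
    have invR: "blk_defined lam k R0 T \<and> blk lam k R0 T \<in> J" using inv[OF T] R0J by auto
    define bb where "bb = blk lam k R0 T"
    have bb0: "bb > 0" using invR lo0 by (auto simp: bb_def J_def)
    define phd where "phd y = be * ln (1 + y) powr (be - 1) * (1 / (1 + y))" for y
    define phid where "phid y = exp (y powr (1 / be)) * ((1 / be) * y powr (1 / be - 1))" for y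
    define D where "D u = phd bb * (Dblk lam k R0 T u * phid (x u))" for u
    have der: "((\<lambda>t. blk_phi lam k (phi be) J (x(u := t)) T) has_real_derivative D u) (at (x u) within phi be ` J)"
      if u: "u \<in> level T k" for u
    proof -
      have r0: "R0 u > 0" using R0J[OF u] lo0 by (auto simp: J_def)
      have xu: "x u > 0" using xR0[OF u] phi_pos[OF r0] by simp
      have ph: "phinv be (x u) = R0 u" using xR0[OF u] phinv_phi[OF be0 r0] by simp
      have d1: "(phinv be has_real_derivative phid (x u)) (at (x u))"
        using phinv_deriv[OF xu, of be] by (simp add: phid_def)
      have d2: "((\<lambda>s. blk lam k (R0(u := s)) T) has_real_derivative Dblk lam k R0 T u) (at (phinv be (x u)))"
        using blk_deriv[OF u conjunct1[OF invR]] by (simp add: ph)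
      have d3: "((\<lambda>t. blk lam k (R0(u := phinv be t)) T) has_real_derivative Dblk lam k R0 T u * phid (x u)) (at (x u))"
        by (rule DERIV_chain2[OF d2 d1])
      have upd: "R0(u := phinv be (x u)) = R0" using ph by auto
      have d4: "(phi be has_real_derivative phd bb) (at (blk lam k (R0(u := phinv be (x u))) T))"
        unfolding upd using phi_deriv[OF bb0, of be] by (simp add: phd_def bb_def)
      have d5: "((\<lambda>t. phi be (blk lam k (R0(u := phinv be t)) T)) has_real_derivative D u) (at (x u))"
        unfolding D_def by (rule DERIV_chain2[OF d4 d3])
      show ?thesis
      proof (rule has_field_derivative_transform_within[OF has_field_derivative_at_within[OF d5] zero_less_one])
        show "x u \<in> phi be ` J" using hx u by auto
        fix t assume t: "t \<in> phi be ` J" and "dist t (x u) < 1"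
        then obtain r where r: "r \<in> J" "t = phi be r" by auto
        have r0': "r > 0" using r lo0 by (auto simp: J_def)
        have ti: "the_inv_into J (phi be) t = phinv be t"
          using the_inv_into_f_f[OF inj r(1)] phinv_phi[OF be0 r0'] r(2) by simp
        have "(\<lambda>w. the_inv_into J (phi be) ((x(u := t)) w)) = R0(u := phinv be t)"
          by (auto simp: R0_def ti)
        then show "phi be (blk lam k (R0(u := phinv be t)) T) = blk_phi lam k (phi be) J (x(u := t)) T"
          by (simp add: blk_phi_def)
      qed
    qed
    define g where "g u = \<bar>Dblk lam k R0 T u\<bar> * (1 + R0 u) * ln (1 + R0 u) powr (1 / a) / ((1 + bb) * ln (1 + bb) powr (1 / a))" for u
    have Dg: "\<bar>D u\<bar> = g u" if u: "u \<in> level T k" for u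
    proof -
      have r0: "R0 u > 0" using R0J[OF u] lo0 by (auto simp: J_def)
      show ?thesis unfolding D_def phd_def phid_def g_def xR0[OF u] phi_def
        by (rule D_alg[OF a2 be_def r0 bb0])
    qed
    have g0: "g u \<ge> 0" if u: "u \<in> level T k" for u
    proof -
      have r0: "R0 u > 0" using R0J[OF u] lo0 by (auto simp: J_def)
      show ?thesis using r0 bb0 by (simp add: g_def)
    qed
    have gpow: "g u powr a = \<bar>Dblk lam k R0 T u\<bar> powr a * (1 + R0 u) powr a * ln (1 + R0 u) / ((1 + bb) powr a * ln (1 + bb))"
      if u: "u \<in> level T k" for u
    proof -
      have r0: "R0 u > 0" using R0J[OF u] lo0 by (auto simp: J_def)
      show ?thesis unfolding g_def by (rule g_pow) (use a2 r0 bb0 in auto)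
    qed
    have Ebb: "(1 + bb) powr a * ln (1 + bb) > 0" using bb0 by simp
    have sga: "(\<Sum>u\<in>level T k. g u powr a) \<le> K ^ k"
    proof -
      have "(\<Sum>u\<in>level T k. g u powr a) = Pw lam a k R0 T / ((1 + bb) powr a * ln (1 + bb))"
        unfolding Pw_def sum_divide_distrib by (rule sum.cong) (auto simp: gpow)
      also have "\<dots> \<le> K ^ k * ((1 + bb) powr a * ln (1 + bb)) / ((1 + bb) powr a * ln (1 + bb))"
      proof (rule divide_right_mono)
        have dg: "degb M k T" using class_degb[OF k _ T] d by (simp add: M_def)
        show "Pw lam a k R0 T \<le> K ^ k * ((1 + bb) powr a * ln (1 + bb))"
          unfolding bb_def
          by (rule P_bound[OF lam K0 _ dg]) (use PV R0J in \<open>auto simp: K_def J_def lo_def\<close>)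
      qed (use Ebb in simp)
      also have "\<dots> = K ^ k" using Ebb by (intro nonzero_mult_div_cancel_right) (rule less_imp_neq[symmetric])
      finally show ?thesis .
    qed
    have N: "real (card (level T k)) \<le> d ^ k" by (rule level_card[OF k _ T]) (use d in simp)
    have "(\<Sum>u\<in>level T k. g u) powr a \<le> real (card (level T k)) powr (a - 1) * (\<Sum>u\<in>level T k. g u powr a)"
      by (rule power_mean[OF finite_level]) (use g0 a2 in auto)
    also have "\<dots> \<le> (d ^ k) powr (a - 1) * K ^ k"
      by (intro mult_mono powr_mono2 N sga) (use a2 in \<open>auto intro: sum_nonneg\<close>)
    also have "(d ^ k) powr (a - 1) * K ^ k = c ^ k"
    proof -
      have "(d ^ k) powr (a - 1) = d powr (real k * (a - 1))"
        using d by (simp add: powr_realpow[symmetric] powr_powr)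
      moreover have "K ^ k = c ^ k * d powr (real k * (1 - a))"
        using d by (simp add: K_def power_mult_distrib powr_realpow[symmetric] powr_powr mult.commute)
      ultimately have "(d ^ k) powr (a - 1) * K ^ k = c ^ k * (d powr (real k * (a - 1)) * d powr (real k * (1 - a)))"
        by simp
      also have "d powr (real k * (a - 1)) * d powr (real k * (1 - a)) = 1"
        using d by (simp add: powr_add[symmetric] algebra_simps)
      finally show ?thesis by simp
    qed
    also have "c ^ k \<le> c ^ 1" using c0 c1 k by (intro power_decreasing) auto
    finally have sg: "(\<Sum>u\<in>level T k. g u) powr a \<le> c" by simp
    have sg0: "(\<Sum>u\<in>level T k. g u) \<ge> 0" using g0 by (simp add: sum_nonneg)
    have "(\<Sum>u\<in>level T k. g u) = ((\<Sum>u\<in>level T k. g u) powr a) powr (1 / a)"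
      using sg0 a2 by (simp add: powr_powr)
    also have "\<dots> \<le> c powr (1 / a)" using sg a2 sg0 by (intro powr_mono2) auto
    finally have "(\<Sum>u\<in>level T k. \<bar>D u\<bar>) \<le> c powr (1 / a)"
      using Dg by (simp cong: sum.cong)
    then show ?thesis using der by (auto simp: \<eta>_def)
  qed
  show ?thesis
    unfolding real_block_contraction_def
  proof (rule exI[of _ lo], rule exI[of _ lam], rule exI[of _ "phi be"], intro conjI)
    show "lo \<le> lam" by (rule lolam)
    show "lam \<in> {lo..lam}" using lolam by simp
    show "- 1 \<notin> {lo..lam}" using lo0 by simp
    show "real_analytic_on (phi be) {lo..lam}" using phi_analytic[OF Jpos] by (simp add: J_def)
    show "inj_on (phi be) {lo..lam}" using inj by (simp add: J_def)
    show "\<forall>x\<in>{lo..lam}. deriv (phi be) x \<noteq> 0"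
    proof
      fix x assume "x \<in> {lo..lam}"
      then have x0: "x > 0" using lo0 by auto
      show "deriv (phi be) x \<noteq> 0"
        using DERIV_imp_deriv[OF phi_deriv[OF x0, of be]] phi_deriv_pos[OF be0 x0] by (metis less_irrefl)
    qed
    show "\<forall>T\<in>tree_class k d. \<forall>R. (\<forall>u\<in>level T k. R u \<in> {lo..lam}) \<longrightarrow>
        blk_defined lam k R T \<and> blk lam k R T \<in> {lo..lam}"
      using inv by (simp add: J_def)
    show "\<exists>\<eta>>0. \<forall>T\<in>tree_class k d. \<forall>x. (\<forall>u\<in>level T k. x u \<in> phi be ` {lo..lam}) \<longrightarrow>
       (\<exists>D. (\<forall>u\<in>level T k. ((\<lambda>t. blk_phi lam k (phi be) {lo..lam} (x(u := t)) T) has_real_derivative D u)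
                (at (x u) within phi be ` {lo..lam})) \<and> (\<Sum>u\<in>level T k. \<bar>D u\<bar>) \<le> 1 - \<eta>)"
      using eta0 main unfolding J_def by blast
  qed
qed

theorem lemma4p1:
  fixes k :: nat and d lam :: real
  assumes "k \<ge> 1" and "d > 1" and "0 \<le> lam" and "lam < lambda_c d"
  shows "real_block_contraction lam k d"
proof (cases "lam = 0")
  case True
  then show ?thesis using case_zero[OF assms(1,2)] by simp
next
  case False
  then show ?thesis using case_pos[OF assms(1,2) _ assms(4)] assms(3) by simp
qed

end
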